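(* Let $\mathcal T$ be a tube. If $S_1,S_2$ are two non-isomorphic simple objects of $\mathcal T$ with $\mathrm{Ext}^1_{\mathcal T}(S_1,S_2)=0$, then there exists an object $M$ of $\mathcal T$ such that $\mathrm{Ext}^1_{\mathcal T}(S_1,M)\cong\Bbbk$, $\mathrm{Ext}^1_{\mathcal T}(M,S_2)\cong\Bbbk$, and $\{S_1,S_2,M\}$ is a brick set.
   Context: $\Bbbk$ is algebraically closed. A tube (of rank $r\ge1$) is the $\Bbbk$-linear abelian category of finite-dimensional nilpotent representations of the quiver with $r$ vertices forming an oriented cycle. A brick is an object $M$ with $\mathrm{Hom}(M,M)=\Bbbk$; a brick set is a finite set of bricks $\{X_1,\dots,X_n\}$ with $\dim\mathrm{Hom}(X_i,X_j)=\delta_{ij}$. *)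

theory Defs
  imports "HOL-Library.Function_Algebras" "HOL-Computational_Algebra.Polynomial"
begin

definition alg_closed :: "'a::field itself \<Rightarrow> bool" where
  "alg_closed _ \<longleftrightarrow> (\<forall>p :: 'a poly. degree p \<ge> 1 \<longrightarrow> (\<exists>x. poly p x = 0))"

(* Finite matrices encoded as functions nat => nat => 'a (row, column), zero-padded.
   A representation of the cyclic quiver with r vertices 0..r-1 and arrows i -> (i+1) mod r
   is a pair (d, f): d i = dimension of the space at vertex i,
   f i = matrix (of size d((i+1) mod r) x d i) of the map V_i -> V_{(i+1) mod r}. *)
type_synonym 'a mat = "nat \<Rightarrow> nat \<Rightarrow> 'a"
type_synonym 'a rep = "(nat \<Rightarrow> nat) \<times> (nat \<Rightarrow> 'a mat)"

definition nxt :: "nat \<Rightarrow> nat \<Rightarrow> nat" where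
  "nxt r i = Suc i mod r"

definition mmul :: "'a::comm_ring_1 mat \<Rightarrow> 'a mat \<Rightarrow> nat \<Rightarrow> 'a mat" where
  "mmul A B n = (\<lambda>a c. \<Sum>b<n. A a b * B b c)"

definition mvec :: "'a::comm_ring_1 mat \<Rightarrow> nat \<Rightarrow> (nat \<Rightarrow> 'a) \<Rightarrow> (nat \<Rightarrow> 'a)" where
  "mvec A n v = (\<lambda>a. \<Sum>b<n. A a b * v b)"

definition idmat :: "nat \<Rightarrow> 'a::comm_ring_1 mat" where
  "idmat n = (\<lambda>a b. if a = b \<and> a < n then 1 else 0)"

fun path_map :: "nat \<Rightarrow> 'a::comm_ring_1 rep \<Rightarrow> nat \<Rightarrow> nat \<Rightarrow> 'a mat" where
  "path_map r M i 0 = idmat (fst M i)"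
| "path_map r M i (Suc k) = mmul (snd M ((i + k) mod r)) (path_map r M i k) (fst M ((i + k) mod r))"

(* an object of the tube of rank r: a finite-dimensional nilpotent representation *)
definition tube_obj :: "nat \<Rightarrow> 'a::comm_ring_1 rep \<Rightarrow> bool" where
  "tube_obj r M \<longleftrightarrow>
     (\<forall>i\<ge>r. fst M i = 0) \<and>
     (\<forall>i a b. (i \<ge> r \<or> a \<ge> fst M (nxt r i) \<or> b \<ge> fst M i) \<longrightarrow> snd M i a b = 0) \<and>
     (\<exists>N. \<forall>i<r. path_map r M i N = (\<lambda>a b. 0))"

definition vscale :: "'a::field \<Rightarrow> (nat \<Rightarrow> 'a) \<Rightarrow> (nat \<Rightarrow> 'a)" where
  "vscale c v = (\<lambda>a. c * v a)"

definition tscale :: "'a::field \<Rightarrow> (nat \<Rightarrow> 'a mat) \<Rightarrow> (nat \<Rightarrow> 'a mat)" where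
  "tscale c g = (\<lambda>i a b. c * g i a b)"

definition tdim :: "(nat \<Rightarrow> 'a::field mat) set \<Rightarrow> nat" where
  "tdim S = vector_space.dim tscale S"

(* C0(M,N) = (+)_i Hom_k(M_i, N_i) *)
definition C0 :: "nat \<Rightarrow> 'a::field rep \<Rightarrow> 'a rep \<Rightarrow> (nat \<Rightarrow> 'a mat) set" where
  "C0 r M N = {g. \<forall>i a b. (i \<ge> r \<or> a \<ge> fst N i \<or> b \<ge> fst M i) \<longrightarrow> g i a b = 0}"

(* C1(M,N) = (+)_{arrows i -> i+1} Hom_k(M_i, N_{i+1}) *)
definition C1 :: "nat \<Rightarrow> 'a::field rep \<Rightarrow> 'a rep \<Rightarrow> (nat \<Rightarrow> 'a mat) set" where
  "C1 r M N = {h. \<forall>i a b. (i \<ge> r \<or> a \<ge> fst N (nxt r i) \<or> b \<ge> fst M i) \<longrightarrow> h i a b = 0}"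

definition delta :: "nat \<Rightarrow> 'a::field rep \<Rightarrow> 'a rep \<Rightarrow> (nat \<Rightarrow> 'a mat) \<Rightarrow> (nat \<Rightarrow> 'a mat)" where
  "delta r M N g = (\<lambda>i a b. if i < r then
       mmul (g (nxt r i)) (snd M i) (fst M (nxt r i)) a b - mmul (snd N i) (g i) (fst N i) a b
     else 0)"

definition Hom :: "nat \<Rightarrow> 'a::field rep \<Rightarrow> 'a rep \<Rightarrow> (nat \<Rightarrow> 'a mat) set" where
  "Hom r M N = {g \<in> C0 r M N. delta r M N g = (\<lambda>i a b. 0)}"

definition hom_dim :: "nat \<Rightarrow> 'a::field rep \<Rightarrow> 'a rep \<Rightarrow> nat" where
  "hom_dim r M N = tdim (Hom r M N)"

(* Ext^1(M,N) = cokernel of delta : C0 -> C1 (standard projective resolution of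
   representations of a quiver); its dimension *)
definition ext1_dim :: "nat \<Rightarrow> 'a::field rep \<Rightarrow> 'a rep \<Rightarrow> nat" where
  "ext1_dim r M N = tdim (C1 r M N) - tdim (delta r M N ` C0 r M N)"

definition hcomp :: "'a::field rep \<Rightarrow> (nat \<Rightarrow> 'a mat) \<Rightarrow> (nat \<Rightarrow> 'a mat) \<Rightarrow> (nat \<Rightarrow> 'a mat)" where
  "hcomp M h g = (\<lambda>i. mmul (h i) (g i) (fst M i))"

definition iso :: "nat \<Rightarrow> 'a::field rep \<Rightarrow> 'a rep \<Rightarrow> bool" where
  "iso r M N \<longleftrightarrow> (\<exists>g \<in> Hom r M N. \<exists>h \<in> Hom r N M.
      (\<forall>i<r. hcomp N h g i = idmat (fst M i)) \<and> (\<forall>i<r. hcomp M g h i = idmat (fst N i)))"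

(* the space at vertex i, as zero-padded coordinate vectors *)
definition space :: "'a::field rep \<Rightarrow> nat \<Rightarrow> (nat \<Rightarrow> 'a) set" where
  "space M i = {v. \<forall>a\<ge>fst M i. v a = 0}"

definition subrep :: "nat \<Rightarrow> 'a::field rep \<Rightarrow> (nat \<Rightarrow> (nat \<Rightarrow> 'a) set) \<Rightarrow> bool" where
  "subrep r M U \<longleftrightarrow> (\<forall>i<r. module.subspace vscale (U i) \<and> U i \<subseteq> space M i \<and>
      mvec (snd M i) (fst M i) ` U i \<subseteq> U (nxt r i))"

definition simple_obj :: "nat \<Rightarrow> 'a::field rep \<Rightarrow> bool" where
  "simple_obj r M \<longleftrightarrow> tube_obj r M \<and> (\<exists>i<r. fst M i > 0) \<and>
     (\<forall>U. subrep r M U \<longrightarrow> (\<forall>i<r. U i = {0}) \<or> (\<forall>i<r. U i = space M i))"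

(* brick set given as a list X_1..X_n: dim Hom(X_i,X_j) = delta_ij (implies each X_i a brick) *)
definition brick_set :: "nat \<Rightarrow> 'a::field rep list \<Rightarrow> bool" where
  "brick_set r Xs \<longleftrightarrow> (\<forall>X\<in>set Xs. tube_obj r X) \<and>
     (\<forall>i<length Xs. \<forall>j<length Xs. hom_dim r (Xs ! i) (Xs ! j) = (if i = j then 1 else 0))"

end

theory Submission
  imports Defs
begin


lemma vs_tscale: "vector_space (tscale :: 'a::field \<Rightarrow> _)"
  by unfold_locales (auto simp: tscale_def fun_eq_iff algebra_simps)

lemma module_vscale: "module (vscale :: 'a::field \<Rightarrow> _)"
  by unfold_locales (auto simp: vscale_def fun_eq_iff algebra_simps)

lemma tdim_zero: "tdim {0::nat \<Rightarrow> 'a::field mat} = 0"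
proof -
  interpret vector_space "tscale :: 'a \<Rightarrow> _" by (rule vs_tscale)
  show ?thesis unfolding tdim_def
  proof (rule dim_unique[of "{}"])
    show "independent {}" by (rule independent_empty)
  qed auto
qed

lemma tdim_line:
  fixes E :: "nat \<Rightarrow> 'a::field mat"
  assumes "E \<noteq> 0"
  shows "tdim (range (\<lambda>c. tscale c E)) = 1"
proof -
  interpret vector_space "tscale :: 'a \<Rightarrow> _" by (rule vs_tscale)
  show ?thesis unfolding tdim_def
  proof (rule dim_unique[of "{E}"])
    have "E = tscale 1 E" by (simp add: tscale_def)
    then show "{E} \<subseteq> range (\<lambda>c. tscale c E)" by blast
    show "range (\<lambda>c. tscale c E) \<subseteq> span {E}"
    proof
      fix x assume "x \<in> range (\<lambda>c. tscale c E)"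
      then obtain c where "x = tscale c E" by blast
      then show "x \<in> span {E}" by (simp add: span_scale span_base)
    qed
    show "independent {E}" using assms by (simp add: independent_insert)
  qed auto
qed

definition Rp :: "nat \<Rightarrow> nat set \<Rightarrow> 'a::field rep" where
  "Rp r P = (\<lambda>k. if k \<in> P then 1 else 0,
             \<lambda>k a b. if a = 0 \<and> b = 0 \<and> k \<in> P \<and> nxt r k \<in> P then 1 else 0)"

definition Zs :: "nat set \<Rightarrow> (nat \<Rightarrow> 'a::field mat) set" where
  "Zs K = {g. \<forall>k a b. \<not>(k \<in> K \<and> a = 0 \<and> b = 0) \<longrightarrow> g k a b = 0}"

definition Ei :: "nat set \<Rightarrow> nat \<Rightarrow> 'a::field mat" where
  "Ei K = (\<lambda>k a b. if k \<in> K \<and> a = 0 \<and> b = 0 then 1 else 0)"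

lemma Zs_empty: "Zs {} = {0}"
  by (auto simp: Zs_def fun_eq_iff)

lemma Ei_nz: assumes "k \<in> K" shows "(Ei K :: nat \<Rightarrow> 'a::field mat) \<noteq> 0"
proof
  assume "Ei K = (0 :: nat \<Rightarrow> 'a::field mat)"
  then have "Ei K k 0 0 = (0::'a)" by simp
  then show False using assms by (simp add: Ei_def)
qed

lemma Zs_single: "(Zs {k0} :: (nat \<Rightarrow> 'a::field mat) set) = range (\<lambda>c. tscale c (Ei {k0}))"
proof (rule equalityI)
  show "(Zs {k0} :: (nat \<Rightarrow> 'a::field mat) set) \<subseteq> range (\<lambda>c. tscale c (Ei {k0}))"
  proof
    fix g :: "nat \<Rightarrow> 'a mat" assume "g \<in> Zs {k0}"
    then have "g = tscale (g k0 0 0) (Ei {k0})"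
      by (auto simp: Zs_def Ei_def tscale_def fun_eq_iff)
    then show "g \<in> range (\<lambda>c. tscale c (Ei {k0}))" by blast
  qed
  show "range (\<lambda>c. tscale c (Ei {k0})) \<subseteq> (Zs {k0} :: (nat \<Rightarrow> 'a::field mat) set)"
    by (auto simp: Zs_def Ei_def tscale_def)
qed

lemma tdim_Zs_empty: "tdim (Zs {} :: (nat \<Rightarrow> 'a::field mat) set) = 0"
  by (simp add: Zs_empty tdim_zero)

lemma tdim_Zs_single: "tdim (Zs {k0} :: (nat \<Rightarrow> 'a::field mat) set) = 1"
  by (simp add: Zs_single tdim_line Ei_nz)

lemma C0_Rp: "C0 r (Rp r P) (Rp r Q) = (Zs ({..<r} \<inter> P \<inter> Q) :: (nat \<Rightarrow> 'a::field mat) set)"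
proof -
  have e: "(i \<ge> r \<or> a \<ge> fst (Rp r Q :: 'a rep) i \<or> b \<ge> fst (Rp r P :: 'a rep) i) \<longleftrightarrow> \<not>(i \<in> ({..<r} \<inter> P \<inter> Q) \<and> a = 0 \<and> b = 0)" for i a b
    by (auto simp: Rp_def)
  show ?thesis unfolding C0_def Zs_def by (simp only: e)
qed

lemma C1_Rp: "C1 r (Rp r P) (Rp r Q) = (Zs {k. k < r \<and> k \<in> P \<and> nxt r k \<in> Q} :: (nat \<Rightarrow> 'a::field mat) set)"
proof -
  have e: "(i \<ge> r \<or> a \<ge> fst (Rp r Q :: 'a rep) (nxt r i) \<or> b \<ge> fst (Rp r P :: 'a rep) i) \<longleftrightarrow> \<not>(i \<in> {k. k < r \<and> k \<in> P \<and> nxt r k \<in> Q} \<and> a = 0 \<and> b = 0)" for i a b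
    by (auto simp: Rp_def)
  show ?thesis unfolding C1_def Zs_def by (simp only: e)
qed

lemma delta_zero: "delta r M N 0 = 0"
  by (auto simp: delta_def mmul_def fun_eq_iff)

lemma ext1_Rp:
  assumes "{..<r} \<inter> P \<inter> Q = {}" "{k. k < r \<and> k \<in> P \<and> nxt r k \<in> Q} = {k0}"
  shows "ext1_dim r (Rp r P :: 'a::field rep) (Rp r Q) = 1"
  unfolding ext1_dim_def C0_Rp C1_Rp assms Zs_empty
  using tdim_Zs_single[of k0] by (simp add: delta_zero tdim_zero)

lemma hom0_Rp:
  assumes "{..<r} \<inter> P \<inter> Q = {}"
  shows "hom_dim r (Rp r P :: 'a::field rep) (Rp r Q) = 0"
proof -
  have "Hom r (Rp r P :: 'a::field rep) (Rp r Q) = {0}"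
    unfolding Hom_def C0_Rp assms Zs_empty using delta_zero[of r "Rp r P :: 'a rep" "Rp r Q"]
    by (auto simp: zero_fun_def)
  then show ?thesis by (simp add: hom_dim_def tdim_zero)
qed

lemma mmul01: "mmul A B (if p then 1 else 0) a b = (if p then A a 0 * B 0 b else 0)"
  by (simp add: mmul_def)

lemma hom1_Rp:
  assumes P: "P \<subseteq> {..<r}" "P \<noteq> {}"
    and conn: "\<And>(g::nat \<Rightarrow> 'a) k k'. (\<And>k. k < r \<Longrightarrow> k \<in> P \<Longrightarrow> nxt r k \<in> P \<Longrightarrow> g (nxt r k) = g k)
                   \<Longrightarrow> k \<in> P \<Longrightarrow> k' \<in> P \<Longrightarrow> g k = g k'"
  shows "hom_dim r (Rp r P :: 'a::field rep) (Rp r P) = 1"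
proof -
  obtain p where p: "p \<in> P" using P by blast
  have dl: "delta r (Rp r P) (Rp r P) g k a b = (if k < r then
     (if nxt r k \<in> P then g (nxt r k) a 0 * (if b = 0 \<and> k \<in> P \<and> nxt r k \<in> P then 1 else 0) else 0)
     - (if k \<in> P then (if a = 0 \<and> k \<in> P \<and> nxt r k \<in> P then 1 else 0) * g k 0 b else 0) else 0)"
    for g :: "nat \<Rightarrow> 'a mat" and k a b
    unfolding delta_def by (simp add: Rp_def mmul01)
  have "Hom r (Rp r P :: 'a::field rep) (Rp r P) = range (\<lambda>c. tscale c (Ei P))"
  proof (rule equalityI)
    show "Hom r (Rp r P :: 'a rep) (Rp r P) \<subseteq> range (\<lambda>c. tscale c (Ei P))"
    proof
      fix g :: "nat \<Rightarrow> 'a mat" assume g: "g \<in> Hom r (Rp r P) (Rp r P)"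
      have z: "g k a b = 0" if "\<not>(k \<in> P \<and> a = 0 \<and> b = 0)" for k a b
        using g that P(1) unfolding Hom_def C0_Rp Zs_def by auto
      have d: "delta r (Rp r P) (Rp r P) g k 0 0 = 0" for k
        using g unfolding Hom_def by simp
      have st: "g (nxt r k) 0 0 = g k 0 0" if "k < r" "k \<in> P" "nxt r k \<in> P" for k
        using d[of k] that by (simp add: dl)
      have eq: "g k 0 0 = g p 0 0" if "k \<in> P" for k
        using conn[of "\<lambda>k. g k 0 0" k p, OF st that p] by blast
      have "g = tscale (g p 0 0) (Ei P)"
        using z eq by (auto simp: tscale_def Ei_def fun_eq_iff)
      then show "g \<in> range (\<lambda>c. tscale c (Ei P))" by blast
    qed
    show "range (\<lambda>c. tscale c (Ei P)) \<subseteq> Hom r (Rp r P :: 'a rep) (Rp r P)"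
    proof
      fix g :: "nat \<Rightarrow> 'a mat" assume "g \<in> range (\<lambda>c. tscale c (Ei P))"
      then obtain c where c: "g = tscale c (Ei P)" by blast
      have "g \<in> C0 r (Rp r P) (Rp r P)"
        unfolding C0_Rp Zs_def c using P(1) by (auto simp: tscale_def Ei_def)
      moreover have "delta r (Rp r P) (Rp r P) g = (\<lambda>i a b. 0)"
        unfolding fun_eq_iff by (intro allI) (simp add: dl c tscale_def Ei_def)
      ultimately show "g \<in> Hom r (Rp r P) (Rp r P)" by (simp add: Hom_def)
    qed
  qed
  then show ?thesis by (simp add: hom_dim_def tdim_line Ei_nz[OF p])
qed



lemma path_Rp:
  assumes "k < r"
  shows "path_map r (Rp r P :: 'a::field rep) k n a b =
     (if a = 0 \<and> b = 0 \<and> (\<forall>t\<le>n. (k + t) mod r \<in> P) then 1 else 0)"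
proof (induction n arbitrary: a b)
  case 0
  then show ?case using assms by (simp add: Rp_def idmat_def)
next
  case (Suc n)
  have nq: "nxt r ((k + n) mod r) = (k + Suc n) mod r"
    by (simp add: nxt_def mod_Suc_eq)
  have "path_map r (Rp r P :: 'a rep) k (Suc n) a b =
     (if (k + n) mod r \<in> P then snd (Rp r P :: 'a rep) ((k + n) mod r) a 0 * path_map r (Rp r P) k n 0 b else 0)"
    by (simp add: Rp_def mmul01 del: path_map.simps(1))
  also have "\<dots> = (if a = 0 \<and> b = 0 \<and> (\<forall>t\<le>Suc n. (k + t) mod r \<in> P) then 1 else 0)"
    unfolding Suc.IH using nq by (auto simp: Rp_def le_Suc_eq)
  finally show ?case .
qed

lemma tube_Rp:
  assumes "P \<subseteq> {..<r}" "i < r" "i \<notin> P"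
  shows "tube_obj r (Rp r P :: 'a::field rep)"
  unfolding tube_obj_def
proof (intro conjI)
  show "\<forall>i\<ge>r. fst (Rp r P :: 'a rep) i = 0" using assms(1) by (auto simp: Rp_def)
  show "\<forall>i a b. (i \<ge> r \<or> a \<ge> fst (Rp r P :: 'a rep) (nxt r i) \<or> b \<ge> fst (Rp r P :: 'a rep) i) \<longrightarrow> snd (Rp r P :: 'a rep) i a b = 0"
    using assms(1) by (auto simp: Rp_def)
  show "\<exists>N. \<forall>i<r. path_map r (Rp r P :: 'a rep) i N = (\<lambda>a b. 0)"
  proof (intro exI allI impI)
    fix k assume k: "k < r"
    define t where "t = (if k \<le> i then i - k else i + r - k)"
    have "t \<le> r" using k assms(2) by (auto simp: t_def)
    moreover have "(k + t) mod r = i" using k assms(2) by (auto simp: t_def)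
    ultimately have "\<not> (\<forall>t\<le>r. (k + t) mod r \<in> P)" using assms(3) by metis
    then show "path_map r (Rp r P :: 'a rep) k r = (\<lambda>a b. 0)"
      by (simp add: fun_eq_iff path_Rp[OF k])
  qed
qed



lemma mvec_mmul: "mvec (mmul A B n) m v = mvec A n (mvec B m v)"
proof -
  have "mvec (mmul A B n) m v c = mvec A n (mvec B m v) c" for c
  proof -
    have "mvec (mmul A B n) m v c = (\<Sum>a<m. \<Sum>b<n. A c b * B b a * v a)"
      by (simp add: mvec_def mmul_def sum_distrib_right)
    also have "\<dots> = (\<Sum>b<n. \<Sum>a<m. A c b * B b a * v a)" by (rule sum.swap)
    also have "\<dots> = mvec A n (mvec B m v) c"
      by (simp add: mvec_def sum_distrib_left mult.assoc)
    finally show ?thesis .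
  qed
  then show ?thesis by auto
qed

lemma mvec_scale: "mvec A n (vscale c y) = vscale c (mvec A n y)"
  by (simp add: mvec_def vscale_def fun_eq_iff sum_distrib_left mult.left_commute)

lemma mvec_zero: "mvec A n 0 = 0"
  by (simp add: mvec_def fun_eq_iff)

lemma subspace_line: "module.subspace vscale (range (\<lambda>c. vscale c (y :: nat \<Rightarrow> 'a::field)))"
proof -
  interpret module "vscale :: 'a \<Rightarrow> _" by (rule module_vscale)
  show ?thesis
  proof (rule subspaceI)
    show "0 \<in> range (\<lambda>c. vscale c y)"
      by (rule range_eqI[of _ _ 0]) (simp add: vscale_def fun_eq_iff)
    fix x z assume "x \<in> range (\<lambda>c. vscale c y)" "z \<in> range (\<lambda>c. vscale c y)"
    then obtain c d where "x = vscale c y" "z = vscale d y" by blast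
    then show "x + z \<in> range (\<lambda>c. vscale c y)"
      by (intro range_eqI[of _ _ "c + d"]) (simp add: vscale_def fun_eq_iff algebra_simps)
  next
    fix x c assume "x \<in> range (\<lambda>c. vscale c y)"
    then obtain d where "x = vscale d y" by blast
    then show "vscale c x \<in> range (\<lambda>c. vscale c y)"
      by (intro range_eqI[of _ _ "c * d"]) (simp add: vscale_def fun_eq_iff algebra_simps)
  qed
qed

lemma subspace_zero: "module.subspace vscale {0 :: nat \<Rightarrow> 'a::field}"
proof -
  interpret module "vscale :: 'a \<Rightarrow> _" by (rule module_vscale)
  show ?thesis by (rule subspaceI) (auto simp: vscale_def fun_eq_iff)
qed

lemma simple_form:
  fixes S :: "'a::field rep"
  assumes "simple_obj r S"
  shows "\<exists>m<r. S = (\<lambda>k. if k = m then 1 else 0, \<lambda>_ _ _. 0)"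
proof -
  define d where "d = fst S"
  define A where "A = snd S"
  have tube: "tube_obj r S" and nz: "\<exists>i<r. d i > 0"
    and simpl: "\<And>U. subrep r S U \<Longrightarrow> (\<forall>i<r. U i = {0}) \<or> (\<forall>i<r. U i = space S i)"
    using assms unfolding simple_obj_def d_def by auto
  have dr: "\<And>k. k \<ge> r \<Longrightarrow> d k = 0" using tube unfolding tube_obj_def d_def by auto
  have Az: "\<And>k a b. k \<ge> r \<or> a \<ge> d (nxt r k) \<or> b \<ge> d k \<Longrightarrow> A k a b = 0"
    using tube unfolding tube_obj_def d_def A_def by blast
  obtain N where N: "\<And>k. k < r \<Longrightarrow> path_map r S k N = (\<lambda>a b. 0)"
    using tube unfolding tube_obj_def by blast
  obtain v where v: "v < r" "d v > 0" using nz by blast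
  define e0 :: "nat \<Rightarrow> 'a" where "e0 = (\<lambda>a. if a = 0 then 1 else 0)"
  define x where "x n = mvec (path_map r S v n) (d v) e0" for n
  have xS: "x (Suc n) = mvec (A ((v + n) mod r)) (d ((v + n) mod r)) (x n)" for n
    by (simp add: x_def mvec_mmul A_def d_def)
  have x0: "x 0 a = (if a = 0 then 1 else 0)" for a
  proof -
    obtain m where m: "d v = Suc m" using v(2) by (cases "d v") auto
    have "x 0 a = (\<Sum>b<d v. idmat (d v) a b * e0 b)"
      by (simp add: x_def mvec_def d_def)
    also have "\<dots> = (\<Sum>b<Suc m. idmat (Suc m) a b * e0 b)"
      by (simp only: m)
    also have "\<dots> = idmat (Suc m) a 0"
      by (subst sum.lessThan_Suc_shift) (simp add: e0_def)
    also have "\<dots> = (if a = 0 then 1 else 0)" by (simp add: idmat_def)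
    finally show ?thesis .
  qed
  have xN: "x N = 0" by (simp add: x_def N[OF v(1)] mvec_def fun_eq_iff)
  have x0nz: "x 0 \<noteq> 0"
  proof
    assume "x 0 = 0" then have "x 0 0 = 0" by simp
    then show False by (simp add: x0)
  qed
  have xsp: "x n a = 0" if "a \<ge> d ((v + n) mod r)" for n a
  proof (cases n)
    case 0
    then show ?thesis using that v by (simp add: x0)
  next
    case (Suc n')
    have "nxt r ((v + n') mod r) = (v + n) mod r" by (simp add: nxt_def mod_Suc_eq Suc)
    then have "A ((v + n') mod r) a b = 0" for b using Az that by metis
    then show ?thesis by (simp add: Suc xS mvec_def)
  qed
  obtain n where n: "x n \<noteq> 0" "x (Suc n) = 0"
  proof (rule ccontr)
    assume "\<not> thesis"
    then have "x n \<noteq> 0 \<Longrightarrow> x (Suc n) \<noteq> 0" for n using that by blast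
    then have "x n \<noteq> 0" for n by (induction n) (use x0nz in auto)
    then show False using xN by blast
  qed
  define m where "m = (v + n) mod r"
  define y where "y = x n"
  have m: "m < r" using v(1) by (simp add: m_def)
  have ysp: "\<And>a. a \<ge> d m \<Longrightarrow> y a = 0" using xsp by (simp add: y_def m_def)
  have ynz: "y \<noteq> 0" using n by (simp add: y_def)
  have ykill: "mvec (A m) (d m) y = 0" using n xS by (simp add: y_def m_def)
  define U where "U k = (if k = m then range (\<lambda>c. vscale c y) else {0})" for k
  have "subrep r S U"
    unfolding subrep_def
  proof (intro allI impI conjI)
    fix k assume "k < r"
    show "module.subspace vscale (U k)"
      by (simp add: U_def subspace_line subspace_zero)
    show "U k \<subseteq> space S k"
      using ysp by (auto simp: U_def space_def vscale_def d_def)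
    show "mvec (snd S k) (fst S k) ` U k \<subseteq> U (nxt r k)"
    proof
      fix z assume "z \<in> mvec (snd S k) (fst S k) ` U k"
      then obtain w where w: "w \<in> U k" "z = mvec (snd S k) (fst S k) w" by blast
      have "z = 0"
      proof (cases "k = m")
        case True
        then obtain c where "w = vscale c y" using w by (auto simp: U_def)
        then have "z = vscale c (mvec (A m) (d m) y)" using w True by (simp add: mvec_scale A_def d_def)
        then show ?thesis by (simp add: ykill vscale_def fun_eq_iff)
      next
        case False
        then show ?thesis using w by (simp add: U_def mvec_zero)
      qed
      moreover have "(0 :: nat \<Rightarrow> 'a) \<in> U (nxt r k)"
        by (auto simp: U_def vscale_def fun_eq_iff intro: range_eqI[of _ _ 0])
      ultimately show "z \<in> U (nxt r k)" by simp
    qed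
  qed
  then have cases: "(\<forall>i<r. U i = {0}) \<or> (\<forall>i<r. U i = space S i)" by (rule simpl)
  have "y \<in> U m" by (auto simp: U_def vscale_def intro: range_eqI[of _ _ 1])
  then have "U m \<noteq> {0}" using ynz by blast
  then have Usp: "\<forall>i<r. U i = space S i" using cases m by blast
  have e0sp: "e0 \<in> space S k" if "d k > 0" for k
    using that by (auto simp: space_def e0_def d_def)
  have e0nz: "e0 \<noteq> 0"
  proof
    assume "e0 = 0" then have "e0 0 = 0" by simp
    then show False by (simp add: e0_def)
  qed
  have dk: "d k = (if k = m then 1 else 0)" for k
  proof (cases "k < r")
    case False then show ?thesis using dr m by auto
  next
    case True
    show ?thesis
    proof (cases "k = m")
      case False
      have "space S k = U k" using Usp True by simp
      then have "space S k = {0}" using False by (simp add: U_def)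
      then have "\<not> d k > 0" using e0sp e0nz by blast
      then show ?thesis using False by simp
    next
      case km: True
      have "space S m = U m" using Usp m by simp
      then have sp: "space S m = range (\<lambda>c. vscale c y)" by (simp add: U_def)
      have "d m \<noteq> 0"
      proof
        assume "d m = 0" then have "y = 0" using ysp by (auto simp: fun_eq_iff)
        then show False using ynz by simp
      qed
      moreover have "\<not> d m \<ge> 2"
      proof
        assume d2: "d m \<ge> 2"
        define e1 :: "nat \<Rightarrow> 'a" where "e1 = (\<lambda>a. if a = 1 then 1 else 0)"
        have "e1 \<in> space S m" using d2 by (auto simp: space_def e1_def d_def)
        then obtain c where c: "e1 = vscale c y" using sp by auto
        have "e0 \<in> space S m" using d2 by (intro e0sp) simp
        then obtain c' where c': "e0 = vscale c' y" using sp by auto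
        have "c * y 1 = 1" using fun_cong[OF c, of 1] by (simp add: e1_def vscale_def)
        then have "c \<noteq> 0" by auto
        moreover have "c * y 0 = 0" using fun_cong[OF c, of 0] by (simp add: e1_def vscale_def)
        ultimately have "y 0 = 0" by simp
        moreover have "c' * y 0 = 1" using fun_cong[OF c', of 0] by (simp add: e0_def vscale_def)
        ultimately show False by simp
      qed
      ultimately show ?thesis using km by simp
    qed
  qed
  have y0: "y 0 \<noteq> 0"
  proof
    assume "y 0 = 0"
    have "y a = 0" for a
    proof (cases a)
      case 0 then show ?thesis using \<open>y 0 = 0\<close> by simp
    next
      case (Suc a') then have "a \<ge> d m" using dk[of m] by simp
      then show ?thesis by (rule ysp)
    qed
    then have "y = 0" by (simp add: fun_eq_iff)
    then show False using ynz by simp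
  qed
  have Ak: "A k a b = 0" for k a b
  proof (cases "k = m \<and> b = 0 \<and> a < d (nxt r k)")
    case False
    have "k \<ge> r \<or> a \<ge> d (nxt r k) \<or> b \<ge> d k" using False dk[of k] by auto
    then show ?thesis by (rule Az)
  next
    case True
    have "mvec (A m) (d m) y a = A m a 0 * y 0" using dk by (simp add: mvec_def)
    then have "A m a 0 * y 0 = 0" using ykill by simp
    then show ?thesis using True y0 by simp
  qed
  have "S = (d, A)" by (simp add: d_def A_def)
  also have "\<dots> = (\<lambda>k. if k = m then 1 else 0, \<lambda>_ _ _. 0)"
  proof -
    have "d = (\<lambda>k. if k = m then 1 else 0)" using dk by (simp add: fun_eq_iff)
    moreover have "A = (\<lambda>_ _ _. 0)" using Ak by (simp add: fun_eq_iff)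
    ultimately show ?thesis by simp
  qed
  finally show ?thesis using m by blast
qed



definition Sf :: "nat \<Rightarrow> 'a::field rep" where
  "Sf m = (\<lambda>k. if k = m then 1 else 0, \<lambda>_ _ _. 0)"

lemma iso_Sf: assumes "m < r" shows "iso r (Sf m :: 'a::field rep) (Sf m)"
proof -
  have H: "Ei {m} \<in> Hom r (Sf m :: 'a rep) (Sf m)"
    unfolding Hom_def C0_def using assms
    by (auto simp: Sf_def Ei_def delta_def mmul_def fun_eq_iff)
  have I: "hcomp (Sf m :: 'a rep) (Ei {m}) (Ei {m}) i = idmat (fst (Sf m :: 'a rep) i)" for i
  proof -
    have "fst (Sf m :: 'a rep) i = (if i = m then 1 else 0)" by (simp add: Sf_def)
    then show ?thesis unfolding hcomp_def
      by (simp add: mmul01 fun_eq_iff Ei_def idmat_def)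
  qed
  show ?thesis unfolding iso_def
    by (rule bexI[OF _ H], rule bexI[OF _ H]) (simp add: I)
qed

lemma Sf_Rp: assumes "m < r" "r \<ge> 2" shows "(Sf m :: 'a::field rep) = Rp r {m}"
proof -
  have "nxt r m \<noteq> m"
  proof
    assume "nxt r m = m"
    then have "Suc m mod r = m" by (simp add: nxt_def)
    then show False using assms by (cases "Suc m < r") (auto simp: le_mod_geq not_less)
  qed
  then show ?thesis by (auto simp: Sf_def Rp_def fun_eq_iff)
qed

lemma mod2: fixes s r :: nat assumes "s < r + r" shows "s mod r = (if s < r then s else s - r)"
proof (cases "s < r")
  case True
  then show ?thesis by simp
next
  case False
  then have le: "r \<le> s" by simp
  have lt: "s - r < r" using assms by linarith
  have "s mod r = (s - r) mod r" using le_mod_geq[OF le] .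
  also have "\<dots> = s - r" using lt by (rule mod_less)
  finally show ?thesis using False by simp
qed

lemma nxt_eq: assumes "k < r" shows "nxt r k = (if Suc k < r then Suc k else 0)"
proof (cases "Suc k < r")
  case False
  then have "Suc k = r" using assms by simp
  then show ?thesis by (simp add: nxt_def)
qed (simp add: nxt_def)

lemma nxt_inj: assumes "k < r" "k' < r" "nxt r k = nxt r k'" shows "k = k'"
  using assms(3) unfolding nxt_eq[OF assms(1)] nxt_eq[OF assms(2)]
  using assms(1,2) by (simp split: if_splits)

lemma nxt_mod: "nxt r (m mod r) = Suc m mod r"
  by (simp add: nxt_def mod_Suc_eq)

lemma chain_exists:
  assumes ij: "i < r" "j < r" "i \<noteq> j" "j \<noteq> nxt r i"
  shows "\<exists>P jm. P \<subseteq> {..<r} \<and> i \<notin> P \<and> j \<notin> P \<and> nxt r i \<in> P \<and> jm \<in> P \<and> nxt r jm = j \<and>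
     (\<forall>g::nat \<Rightarrow> 'a. (\<forall>k. k < r \<longrightarrow> k \<in> P \<longrightarrow> nxt r k \<in> P \<longrightarrow> g (nxt r k) = g k) \<longrightarrow>
        (\<forall>k\<in>P. \<forall>k'\<in>P. g k = g k'))"
proof -
  define l where "l = (if i < j then j - i - 1 else j + r - i - 1)"
  define f where "f t = (i + 1 + t) mod r" for t
  define P where "P = f ` {..<l}"
  have bnd: "i + 1 + t < r + r" if "t < l" for t
    using that ij by (auto simp: l_def split: if_splits)
  have fl: "f t = (if i + 1 + t < r then i + 1 + t else i + 1 + t - r)" if "t < l" for t
    unfolding f_def by (rule mod2[OF bnd[OF that]])
  have l1: "l \<ge> 1"
    using nxt_eq[OF ij(1)] ij by (auto simp: l_def split: if_splits)
  have fr: "f t < r" for t using ij by (simp add: f_def)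
  have Pr: "P \<subseteq> {..<r}" using fr by (auto simp: P_def)
  have iP: "i \<notin> P"
  proof
    assume "i \<in> P"
    then obtain t where t: "t < l" "f t = i" by (auto simp: P_def)
    then show False using fl[OF t(1)] ij by (auto simp: l_def split: if_splits)
  qed
  have jP: "j \<notin> P"
  proof
    assume "j \<in> P"
    then obtain t where t: "t < l" "f t = j" by (auto simp: P_def)
    then show False using fl[OF t(1)] ij by (auto simp: l_def split: if_splits)
  qed
  have nP: "nxt r i \<in> P"
  proof -
    have "nxt r i = f 0" by (simp add: f_def nxt_def)
    then show ?thesis using l1 by (auto simp: P_def)
  qed
  define jm where "jm = f (l - 1)"
  have jmP: "jm \<in> P" using l1 by (auto simp: P_def jm_def)
  have fS: "nxt r (f t) = f (Suc t)" for t by (simp add: f_def nxt_mod)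
  have "nxt r jm = f l" using fS[of "l - 1"] l1 by (simp add: jm_def)
  also have "f l = j"
  proof (cases "i < j")
    case True
    then have "i + 1 + l = j" using l1 by (simp add: l_def)
    then show ?thesis using ij by (simp add: f_def)
  next
    case False
    then have "i + 1 + l = j + r" using l1 ij by (simp add: l_def)
    then show ?thesis using ij by (simp add: f_def)
  qed
  finally have jmn: "nxt r jm = j" .
  have conn: "\<forall>k\<in>P. \<forall>k'\<in>P. g k = g k'"
    if g: "\<forall>k. k < r \<longrightarrow> k \<in> P \<longrightarrow> nxt r k \<in> P \<longrightarrow> g (nxt r k) = g k" for g :: "nat \<Rightarrow> 'a"
  proof -
    have IH: "g (f t) = g (f 0)" if "t < l" for t
      using that
    proof (induction t)
      case 0
      show ?case by simp
    next
      case (Suc t)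
      have t: "t < l" using Suc.prems by simp
      have a: "f t \<in> P" using t by (simp add: P_def)
      have b: "nxt r (f t) \<in> P" unfolding fS P_def using Suc.prems by blast
      have "g (nxt r (f t)) = g (f t)" using g[rule_format, OF fr[of t] a b] .
      then show ?case using Suc.IH t by (simp add: fS)
    qed
    show ?thesis
    proof (intro ballI)
      fix k k' assume "k \<in> P" "k' \<in> P"
      obtain t where t: "t < l" "f t = k" using \<open>k \<in> P\<close> by (auto simp: P_def)
      obtain t' where t': "t' < l" "f t' = k'" using \<open>k' \<in> P\<close> by (auto simp: P_def)
      have "g k = g (f 0)" using IH[OF t(1)] t(2) by simp
      moreover have "g k' = g (f 0)" using IH[OF t'(1)] t'(2) by simp
      ultimately show "g k = g k'" by simp
    qed
  qed
  show ?thesis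
    apply (rule exI[of _ P], rule exI[of _ jm])
    using Pr iP jP nP jmP jmn conn by simp
qed



theorem lemma5p3:
  fixes r :: nat and S1 S2 :: "'a::field rep"
  assumes "alg_closed TYPE('a)"
    and "r \<ge> 1"
    and "simple_obj r S1" and "simple_obj r S2"
    and "\<not> iso r S1 S2"
    and "ext1_dim r S1 S2 = 0"
  shows "\<exists>M. tube_obj r M \<and> ext1_dim r S1 M = 1 \<and> ext1_dim r M S2 = 1 \<and>
             brick_set r [S1, S2, M]"
proof -
  obtain i where i: "i < r" "S1 = Sf i"
    using simple_form[OF assms(3)] unfolding Sf_def by blast
  obtain j where j: "j < r" "S2 = Sf j"
    using simple_form[OF assms(4)] unfolding Sf_def by blast
  have ij: "i \<noteq> j" using assms(5) iso_Sf[OF i(1)] i j by auto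
  have r2: "r \<ge> 2" using i(1) j(1) ij by linarith
  have S1: "S1 = Rp r {i}" using i Sf_Rp[OF i(1) r2] by simp
  have S2: "S2 = Rp r {j}" using j Sf_Rp[OF j(1) r2] by simp
  have jn: "j \<noteq> nxt r i"
  proof
    assume jn: "j = nxt r i"
    have "ext1_dim r (Rp r {i} :: 'a rep) (Rp r {j}) = 1"
      by (rule ext1_Rp[of r _ _ i]) (use ij i(1) jn in auto)
    then show False using assms(6) S1 S2 by simp
  qed
  obtain P jm where P: "P \<subseteq> {..<r}" "i \<notin> P" "j \<notin> P" "nxt r i \<in> P" "jm \<in> P" "nxt r jm = j"
    and conn: "\<forall>g::nat \<Rightarrow> 'a. (\<forall>k. k < r \<longrightarrow> k \<in> P \<longrightarrow> nxt r k \<in> P \<longrightarrow> g (nxt r k) = g k) \<longrightarrow>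
        (\<forall>k\<in>P. \<forall>k'\<in>P. g k = g k')"
    using chain_exists[OF i(1) j(1) ij jn] by blast
  have jmr: "jm < r" using P(1,5) by auto
  define M where "M = (Rp r P :: 'a rep)"
  have tM: "tube_obj r M" unfolding M_def by (rule tube_Rp[OF P(1) i(1) P(2)])
  have e1: "ext1_dim r S1 M = 1" unfolding S1 M_def
    by (rule ext1_Rp[of r _ _ i]) (use P(2,4) i(1) in auto)
  have s1: "{..<r} \<inter> P \<inter> {j} = {}" using P(3) by blast
  have s2: "{k. k < r \<and> k \<in> P \<and> nxt r k \<in> {j}} = {jm}"
  proof (rule set_eqI)
    fix k
    show "k \<in> {k. k < r \<and> k \<in> P \<and> nxt r k \<in> {j}} \<longleftrightarrow> k \<in> {jm}"
    proof
      assume "k \<in> {k. k < r \<and> k \<in> P \<and> nxt r k \<in> {j}}"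
      then have "k < r" "nxt r k = nxt r jm" using P(6) by auto
      then have "k = jm" using nxt_inj[OF _ jmr] by blast
      then show "k \<in> {jm}" by simp
    next
      assume "k \<in> {jm}"
      then show "k \<in> {k. k < r \<and> k \<in> P \<and> nxt r k \<in> {j}}" using P(5,6) jmr by simp
    qed
  qed
  have e2: "ext1_dim r M S2 = 1" unfolding S2 M_def by (rule ext1_Rp[OF s1 s2])
  have t1: "tube_obj r S1" and t2: "tube_obj r S2"
    using assms(3,4) by (auto simp: simple_obj_def)
  have connP: "\<And>(g::nat \<Rightarrow> 'a) k k'. (\<And>k. k < r \<Longrightarrow> k \<in> P \<Longrightarrow> nxt r k \<in> P \<Longrightarrow> g (nxt r k) = g k)
                   \<Longrightarrow> k \<in> P \<Longrightarrow> k' \<in> P \<Longrightarrow> g k = g k'"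
    using conn by blast
  have h11: "hom_dim r S1 S1 = 1" unfolding S1
    by (rule hom1_Rp) (use i(1) in auto)
  have h22: "hom_dim r S2 S2 = 1" unfolding S2
    by (rule hom1_Rp) (use j(1) in auto)
  have h33: "hom_dim r M M = 1" unfolding M_def
    by (rule hom1_Rp[OF P(1)]) (use P(4) connP in auto)
  have h12: "hom_dim r S1 S2 = 0" unfolding S1 S2 by (rule hom0_Rp) (use ij in auto)
  have h21: "hom_dim r S2 S1 = 0" unfolding S1 S2 by (rule hom0_Rp) (use ij in auto)
  have h13: "hom_dim r S1 M = 0" unfolding S1 M_def by (rule hom0_Rp) (use P(2) in auto)
  have h31: "hom_dim r M S1 = 0" unfolding S1 M_def by (rule hom0_Rp) (use P(2) in auto)
  have h23: "hom_dim r S2 M = 0" unfolding S2 M_def by (rule hom0_Rp) (use P(3) in auto)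
  have h32: "hom_dim r M S2 = 0" unfolding S2 M_def by (rule hom0_Rp) (use P(3) in auto)
  have "brick_set r [S1, S2, M]"
    unfolding brick_set_def
  proof (intro conjI allI impI)
    show "\<forall>X\<in>set [S1, S2, M]. tube_obj r X" using t1 t2 tM by simp
  next
    fix a b assume a: "a < length [S1, S2, M]" and b: "b < length [S1, S2, M]"
    then have "a = 0 \<or> a = 1 \<or> a = 2" "b = 0 \<or> b = 1 \<or> b = 2" by auto
    then show "hom_dim r ([S1, S2, M] ! a) ([S1, S2, M] ! b) = (if a = b then 1 else 0)"
      using h11 h22 h33 h12 h21 h13 h31 h23 h32 by auto
  qed
  then show ?thesis using tM e1 e2 by blast
qed


end
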